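(* Let $Y$ be a solid vector space and $(X,d)$ a cone metric space over $Y$. Then convergence in $X$ has the following properties: (i) any convergent sequence has a unique limit; (ii) any subsequence of a convergent sequence converges to the same limit; (iii) any convergent sequence is bounded, i.e. its set of terms is contained in some closed ball; (iv) the convergence and the limit of a sequence do not depend on finitely many of its terms.
   Context: Vector space with convergence: a real vector space $Y$ with a relation $\to$ between sequences in $Y$ and points of $Y$ (uniqueness of limits not assumed) such that (C1) $x_n\to x$, $y_n\to y$ imply $x_n+y_n\to x+y$; (C2) $x_n\to x$, $\lambda\in\mathbb R$ imply $\lambda x_n\to\lambda x$; (C3) $\lambda_n\to\lambda$ in $\mathbb R$ imply $\lambda_n x\to\lambda x$. $A\subseteq Y$ is open if $x_n\to x\in A$ implies $x_n\in A$ for all but finitely many $n$; closed if $x_n\to x$, $x_n\in A$ $\forall n$ imply $x\in A$; $A^\circ$ is the union of all open subsets of $A$. A cone is a nonempty closed $K$ with $\lambda K\subseteq K$ ($\lambda\ge0$), $K+K\subseteq K$, $K\cap(-K)=\{0\}$; solid if $K\ne\{0\}$, $K^\circ\ne\emptyset$. A vector ordering is a partial order $\preceq$ with (V1) $x\preceq y\Rightarrow x+z\preceq y+z$; (V2) $\lambda\ge0$, $x\preceq y\Rightarrow\lambda x\preceq\lambda y$; (V3) $x_n\to x$, $y_n\to y$, $x_n\preceq y_n$ $\forall n\Rightarrow x\preceq y$. Solid vector space: positive cone $K=\{x:x\succeq0\}$ solid, with $x\prec y$ iff $y-x\in K^\circ$. Cone metric space over $Y$: nonempty $X$ with $d\colon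 X\times X\to Y$, $d(x,y)\succeq0$, $d(x,y)=0$ iff $x=y$, $d(x,y)=d(y,x)$, $d(x,y)\preceq d(x,z)+d(z,y)$. Convergence in $X$ is with respect to the topology with basis the open balls $U(x,r)=\{y:d(y,x)\prec r\}$ ($r\succ0$): $x_n\to x$ iff for every $c\succ0$, $d(x_n,x)\prec c$ for all but finitely many $n$. Closed ball $\overline U(x,r)=\{y:d(y,x)\preceq r\}$, $r\succeq0$. *)

theory Defs
  imports "HOL-Analysis.Analysis"
begin

text \<open>A vector space with convergence: a real vector space 'y together with a
  relation conv between sequences and points (limits need not be unique).\<close>

definition vs_conv :: "((nat \<Rightarrow> 'y::real_vector) \<Rightarrow> 'y \<Rightarrow> bool) \<Rightarrow> bool" where
  "vs_conv conv \<longleftrightarrow>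
     (\<forall>xs x ys y. conv xs x \<and> conv ys y \<longrightarrow> conv (\<lambda>n. xs n + ys n) (x + y)) \<and>
     (\<forall>xs x (c::real). conv xs x \<longrightarrow> conv (\<lambda>n. c *\<^sub>R xs n) (c *\<^sub>R x)) \<and>
     (\<forall>(ls::nat \<Rightarrow> real) l x. ls \<longlonglongrightarrow> l \<longrightarrow> conv (\<lambda>n. ls n *\<^sub>R x) (l *\<^sub>R x))"

definition conv_open :: "((nat \<Rightarrow> 'y) \<Rightarrow> 'y \<Rightarrow> bool) \<Rightarrow> 'y set \<Rightarrow> bool" where
  "conv_open conv A \<longleftrightarrow>
     (\<forall>xs x. conv xs x \<and> x \<in> A \<longrightarrow> (\<forall>\<^sub>F n in sequentially. xs n \<in> A))"

definition conv_closed :: "((nat \<Rightarrow> 'y) \<Rightarrow> 'y \<Rightarrow> bool) \<Rightarrow> 'y set \<Rightarrow> bool" where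
  "conv_closed conv A \<longleftrightarrow> (\<forall>xs x. conv xs x \<and> (\<forall>n. xs n \<in> A) \<longrightarrow> x \<in> A)"

definition conv_interior :: "((nat \<Rightarrow> 'y) \<Rightarrow> 'y \<Rightarrow> bool) \<Rightarrow> 'y set \<Rightarrow> 'y set" where
  "conv_interior conv A = \<Union>{U. U \<subseteq> A \<and> conv_open conv U}"

definition is_cone :: "((nat \<Rightarrow> 'y::real_vector) \<Rightarrow> 'y \<Rightarrow> bool) \<Rightarrow> 'y set \<Rightarrow> bool" where
  "is_cone conv K \<longleftrightarrow> K \<noteq> {} \<and> conv_closed conv K \<and>
     (\<forall>(c::real) x. c \<ge> 0 \<and> x \<in> K \<longrightarrow> c *\<^sub>R x \<in> K) \<and>
     (\<forall>x y. x \<in> K \<and> y \<in> K \<longrightarrow> x + y \<in> K) \<and>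
     K \<inter> uminus ` K = {0}"

definition solid_cone :: "((nat \<Rightarrow> 'y::real_vector) \<Rightarrow> 'y \<Rightarrow> bool) \<Rightarrow> 'y set \<Rightarrow> bool" where
  "solid_cone conv K \<longleftrightarrow> is_cone conv K \<and> K \<noteq> {0} \<and> conv_interior conv K \<noteq> {}"

definition vector_ordering ::
  "((nat \<Rightarrow> 'y::real_vector) \<Rightarrow> 'y \<Rightarrow> bool) \<Rightarrow> ('y \<Rightarrow> 'y \<Rightarrow> bool) \<Rightarrow> bool" where
  "vector_ordering conv le \<longleftrightarrow>
     (\<forall>x. le x x) \<and> (\<forall>x y. le x y \<and> le y x \<longrightarrow> x = y) \<and>
     (\<forall>x y z. le x y \<and> le y z \<longrightarrow> le x z) \<and>
     (\<forall>x y z. le x y \<longrightarrow> le (x + z) (y + z)) \<and>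
     (\<forall>(c::real) x y. c \<ge> 0 \<and> le x y \<longrightarrow> le (c *\<^sub>R x) (c *\<^sub>R y)) \<and>
     (\<forall>xs x ys y. conv xs x \<and> conv ys y \<and> (\<forall>n. le (xs n) (ys n)) \<longrightarrow> le x y)"

definition solid_vector_space ::
  "((nat \<Rightarrow> 'y::real_vector) \<Rightarrow> 'y \<Rightarrow> bool) \<Rightarrow> ('y \<Rightarrow> 'y \<Rightarrow> bool) \<Rightarrow> bool" where
  "solid_vector_space conv le \<longleftrightarrow> vs_conv conv \<and> vector_ordering conv le \<and>
     solid_cone conv {x. le 0 x}"

definition slt ::
  "((nat \<Rightarrow> 'y::real_vector) \<Rightarrow> 'y \<Rightarrow> bool) \<Rightarrow> ('y \<Rightarrow> 'y \<Rightarrow> bool) \<Rightarrow> 'y \<Rightarrow> 'y \<Rightarrow> bool" where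
  "slt conv le x y \<longleftrightarrow> y - x \<in> conv_interior conv {z. le 0 z}"

definition cone_metric :: "('y::real_vector \<Rightarrow> 'y \<Rightarrow> bool) \<Rightarrow> ('x \<Rightarrow> 'x \<Rightarrow> 'y) \<Rightarrow> bool" where
  "cone_metric le d \<longleftrightarrow>
     (\<forall>x y. le 0 (d x y)) \<and> (\<forall>x y. d x y = 0 \<longleftrightarrow> x = y) \<and>
     (\<forall>x y. d x y = d y x) \<and> (\<forall>x y z. le (d x y) (d x z + d z y))"

definition cm_conv ::
  "((nat \<Rightarrow> 'y::real_vector) \<Rightarrow> 'y \<Rightarrow> bool) \<Rightarrow> ('y \<Rightarrow> 'y \<Rightarrow> bool) \<Rightarrow> ('x \<Rightarrow> 'x \<Rightarrow> 'y)
     \<Rightarrow> (nat \<Rightarrow> 'x) \<Rightarrow> 'x \<Rightarrow> bool" where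
  "cm_conv conv le d xs x \<longleftrightarrow>
     (\<forall>c. slt conv le 0 c \<longrightarrow> (\<forall>\<^sub>F n in sequentially. slt conv le (d (xs n) x) c))"

definition cm_cball :: "('y \<Rightarrow> 'y \<Rightarrow> bool) \<Rightarrow> ('x \<Rightarrow> 'x \<Rightarrow> 'y) \<Rightarrow> 'x \<Rightarrow> 'y \<Rightarrow> 'x set" where
  "cm_cball le d a r = {y. le (d y a) r}"

end

theory Submission
  imports Defs
begin

lemma sv_facts:
  assumes "solid_vector_space conv le"
  shows "vs_conv conv" "vector_ordering conv le" "solid_cone conv {x. le 0 x}"
  using assms unfolding solid_vector_space_def by (simp_all only:)

lemma vc_add: "vs_conv conv \<Longrightarrow> conv xs x \<Longrightarrow> conv ys y \<Longrightarrow> conv (\<lambda>n. xs n + ys n) (x + y)"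
  unfolding vs_conv_def by blast
lemma vc_scale: "vs_conv conv \<Longrightarrow> conv xs x \<Longrightarrow> conv (\<lambda>n. c *\<^sub>R xs n) (c *\<^sub>R x)"
  unfolding vs_conv_def by blast
lemma vc_lim: "vs_conv conv \<Longrightarrow> ls \<longlonglongrightarrow> l \<Longrightarrow> conv (\<lambda>n. ls n *\<^sub>R x) (l *\<^sub>R x)"
  unfolding vs_conv_def by blast
lemma vo_refl: "vector_ordering conv le \<Longrightarrow> le x x"
  unfolding vector_ordering_def by blast
lemma vo_antisym: "vector_ordering conv le \<Longrightarrow> le x y \<Longrightarrow> le y x \<Longrightarrow> x = y"
  unfolding vector_ordering_def by blast
lemma vo_trans: "vector_ordering conv le \<Longrightarrow> le x y \<Longrightarrow> le y z \<Longrightarrow> le x z"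
  unfolding vector_ordering_def by blast
lemma vo_add: "vector_ordering conv le \<Longrightarrow> le x y \<Longrightarrow> le (x + z) (y + z)"
  unfolding vector_ordering_def by blast
lemma vo_scale: "vector_ordering conv le \<Longrightarrow> (c::real) \<ge> 0 \<Longrightarrow> le x y \<Longrightarrow> le (c *\<^sub>R x) (c *\<^sub>R y)"
  unfolding vector_ordering_def by blast
lemma vo_lim: "vector_ordering conv le \<Longrightarrow> conv xs x \<Longrightarrow> conv ys y \<Longrightarrow> (\<And>n. le (xs n) (ys n)) \<Longrightarrow> le x y"
  unfolding vector_ordering_def by blast

lemma cm_nn: "cone_metric le d \<Longrightarrow> le 0 (d x y)" unfolding cone_metric_def by blast
lemma cm_zero: "cone_metric le d \<Longrightarrow> d x y = 0 \<longleftrightarrow> x = y" unfolding cone_metric_def by blast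
lemma cm_sym: "cone_metric le d \<Longrightarrow> d x y = d y x" unfolding cone_metric_def by blast
lemma cm_tri: "cone_metric le d \<Longrightarrow> le (d x y) (d x z + d z y)" unfolding cone_metric_def by blast

lemma sc_int: "solid_cone conv K \<Longrightarrow> \<exists>c0. c0 \<in> conv_interior conv K"
  unfolding solid_cone_def using ex_in_conv by (elim conjE) blast

lemma const_conv:
  assumes "vs_conv conv" shows "conv (\<lambda>n. c) c"
  using vc_lim[OF assms tendsto_const, of "1::real" c] by simp

lemma interior_sub:
  "conv_interior conv A \<subseteq> A"
  unfolding conv_interior_def by auto

lemma interior_pos:
  assumes "u \<in> conv_interior conv {z. le 0 z}" shows "le 0 u"
proof -
  have "u \<in> {z. le 0 z}" by (rule subsetD[OF interior_sub assms])
  then show ?thesis by simp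
qed

lemma interior_iff:
  "u \<in> conv_interior conv A \<longleftrightarrow> (\<exists>U. U \<subseteq> A \<and> conv_open conv U \<and> u \<in> U)"
  unfolding conv_interior_def by auto

lemma interior_translate:
  assumes sv: "solid_vector_space conv le" and u: "u \<in> conv_interior conv {z. le 0 z}"
    and k: "le 0 k"
  shows "u + k \<in> conv_interior conv {z. le 0 z}"
proof -
  have vc: "vs_conv conv" and vo: "vector_ordering conv le" by (rule sv_facts[OF sv])+
  obtain U where U: "U \<subseteq> {z. le 0 z}" "conv_open conv U" "u \<in> U" using u unfolding interior_iff by blast
  define V where "V = (\<lambda>x. x + k) ` U"
  have "V \<subseteq> {z. le 0 z}"
  proof
    fix v assume "v \<in> V"
    then obtain x where x: "x \<in> U" "v = x + k" unfolding V_def by auto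
    have "le 0 x" using U x by auto
    then have "le (0 + k) (x + k)" by (rule vo_add[OF vo])
    then show "v \<in> {z. le 0 z}" using vo_trans[OF vo k] x by auto
  qed
  moreover have "conv_open conv V"
    unfolding conv_open_def
  proof (intro allI impI)
    fix xs x assume h: "conv xs x \<and> x \<in> V"
    then obtain y where y: "y \<in> U" "x = y + k" unfolding V_def by auto
    have "conv (\<lambda>n. - k) (- k)" using const_conv[OF vc] .
    then have "conv (\<lambda>n. xs n + - k) (x + - k)" using h vc_add[OF vc] by blast
    then have "\<forall>\<^sub>F n in sequentially. xs n + - k \<in> U"
      using U(2) y unfolding conv_open_def by auto
    then show "\<forall>\<^sub>F n in sequentially. xs n \<in> V"
    proof (rule eventually_mono)
      fix n assume "xs n + - k \<in> U"
      moreover have "xs n = (xs n + - k) + k" by simp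
      ultimately show "xs n \<in> V" unfolding V_def by blast
    qed
  qed
  moreover have "u + k \<in> V" using U unfolding V_def by auto
  ultimately show ?thesis unfolding interior_iff by blast
qed

lemma interior_scale:
  assumes sv: "solid_vector_space conv le" and u: "u \<in> conv_interior conv {z. le 0 z}"
    and c: "(c::real) > 0"
  shows "c *\<^sub>R u \<in> conv_interior conv {z. le 0 z}"
proof -
  have vc: "vs_conv conv" and vo: "vector_ordering conv le" by (rule sv_facts[OF sv])+
  obtain U where U: "U \<subseteq> {z. le 0 z}" "conv_open conv U" "u \<in> U" using u unfolding interior_iff by blast
  define V where "V = (\<lambda>x. c *\<^sub>R x) ` U"
  have "V \<subseteq> {z. le 0 z}"
  proof
    fix v assume "v \<in> V"
    then obtain x where x: "x \<in> U" "v = c *\<^sub>R x" unfolding V_def by auto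
    have "le 0 x" using U x by auto
    then have "le (c *\<^sub>R 0) (c *\<^sub>R x)" using vo_scale[OF vo, of c 0 x] c by simp
    then show "v \<in> {z. le 0 z}" using x by auto
  qed
  moreover have "conv_open conv V"
    unfolding conv_open_def
  proof (intro allI impI)
    fix xs x assume h: "conv xs x \<and> x \<in> V"
    then obtain y where y: "y \<in> U" "x = c *\<^sub>R y" unfolding V_def by auto
    have "conv (\<lambda>n. (1/c) *\<^sub>R xs n) ((1/c) *\<^sub>R x)" using h vc_scale[OF vc] by blast
    moreover have "(1/c) *\<^sub>R x = y" using y c by simp
    ultimately have "\<forall>\<^sub>F n in sequentially. (1/c) *\<^sub>R xs n \<in> U"
      using U(2) y unfolding conv_open_def by auto
    then show "\<forall>\<^sub>F n in sequentially. xs n \<in> V"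
    proof (rule eventually_mono)
      fix n assume "(1/c) *\<^sub>R xs n \<in> U"
      moreover have "xs n = c *\<^sub>R ((1/c) *\<^sub>R xs n)" using c by simp
      ultimately show "xs n \<in> V" unfolding V_def by blast
    qed
  qed
  moreover have "c *\<^sub>R u \<in> V" using U unfolding V_def by auto
  ultimately show ?thesis unfolding interior_iff by blast
qed

lemma le_slt_trans:
  assumes sv: "solid_vector_space conv le" and "le x y" "slt conv le y z"
  shows "slt conv le x z"
proof -
  have vo: "vector_ordering conv le" by (rule sv_facts[OF sv])+
  have "le (x + - x) (y + - x)" using assms(2) by (rule vo_add[OF vo])
  then have "le 0 (y - x)" by simp
  then have "(z - y) + (y - x) \<in> conv_interior conv {z. le 0 z}"
    using interior_translate[OF sv] assms(3) unfolding slt_def by blast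
  then show ?thesis unfolding slt_def by (simp add: algebra_simps)
qed

lemma slt_add:
  assumes sv: "solid_vector_space conv le" and "slt conv le 0 a" "slt conv le 0 b"
  shows "slt conv le 0 (a + b)"
proof -
  have "le 0 b" using assms(3) unfolding slt_def by (simp add: interior_pos)
  then show ?thesis using interior_translate[OF sv, of a b] assms(2) unfolding slt_def by simp
qed

lemma slt_le:
  assumes sv: "solid_vector_space conv le" and "slt conv le x y" shows "le x y"
proof -
  have vo: "vector_ordering conv le" by (rule sv_facts[OF sv])+
  have "y - x \<in> conv_interior conv {z. le 0 z}" using assms(2) unfolding slt_def .
  then have "y - x \<in> {z. le 0 z}" using interior_pos by simp
  then have "le (0 + x) (y - x + x)" using vo_add[OF vo] by blast
  then show ?thesis by simp
qed

lemma zero_lemma: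
  assumes sv: "solid_vector_space conv le" and a: "le 0 a"
    and h: "\<And>c. slt conv le 0 c \<Longrightarrow> slt conv le a c"
  shows "a = 0"
proof -
  have vc: "vs_conv conv" and vo: "vector_ordering conv le" and sc: "solid_cone conv {x. le 0 x}"
    by (rule sv_facts[OF sv])+
  obtain c0 where c0: "c0 \<in> conv_interior conv {x. le 0 x}" using sc_int[OF sc] by blast
  have "le a ((1 / (real n + 1)) *\<^sub>R c0)" for n
  proof -
    have "(1 / (real n + 1)) *\<^sub>R c0 \<in> conv_interior conv {x. le 0 x}"
      using interior_scale[OF sv c0] by simp
    then have "slt conv le 0 ((1 / (real n + 1)) *\<^sub>R c0)" unfolding slt_def by simp
    then show ?thesis using h slt_le[OF sv] by blast
  qed
  moreover have "conv (\<lambda>n. a) a" using const_conv[OF vc] .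
  moreover have "conv (\<lambda>n. (1 / (real n + 1)) *\<^sub>R c0) (0 *\<^sub>R c0)"
  proof -
    have "(\<lambda>n. 1 / (real n + 1)) \<longlonglongrightarrow> 0"
      using LIMSEQ_inverse_real_of_nat by (simp add: inverse_eq_divide add.commute)
    then show ?thesis by (rule vc_lim[OF vc])
  qed
  ultimately have "le a (0 *\<^sub>R c0)" using vo_lim[OF vo, of "\<lambda>n. a" a] by blast
  then show ?thesis using a vo_antisym[OF vo] by simp
qed

lemma sum_nonneg_le:
  assumes vo: "vector_ordering conv le" and fin: "finite S"
    and nn: "\<And>i. i \<in> S \<Longrightarrow> le 0 (f i)"
  shows "le 0 (sum f S)"
  using fin nn
proof (induction S rule: finite_induct)
  case empty
  have "le 0 0" by (rule vo_refl[OF vo])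
  then show ?case by simp
next
  case (insert x F)
  have fx: "le 0 (f x)" using insert.prems by simp
  have sF: "le 0 (sum f F)" using insert.IH insert.prems by simp
  have "le (0 + sum f F) (f x + sum f F)" using fx by (rule vo_add[OF vo])
  then have "le (sum f F) (f x + sum f F)" by simp
  then have "le 0 (f x + sum f F)" by (rule vo_trans[OF vo sF])
  then show ?case using insert.hyps by simp
qed

lemma le_add_nonneg:
  assumes vo: "vector_ordering conv le" and "le x y" "le 0 z" shows "le x (y + z)"
proof -
  have "le (0 + y) (z + y)" using assms(3) by (rule vo_add[OF vo])
  then have "le y (y + z)" by (simp add: add.commute)
  then show ?thesis by (rule vo_trans[OF vo assms(2)])
qed

lemma term_le_sum:
  assumes vo: "vector_ordering conv le" and fin: "finite S" and i: "i \<in> S"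
    and nn: "\<And>i. i \<in> S \<Longrightarrow> le 0 (f i)"
  shows "le (f i) (sum f S)"
proof -
  have "sum f S = f i + sum f (S - {i})" using fin i by (simp add: sum.remove)
  moreover have "le 0 (sum f (S - {i}))" using sum_nonneg_le[OF vo, of "S - {i}" f] fin nn by simp
  moreover have "le (f i) (f i)" using vo_refl[OF vo] by blast
  ultimately show ?thesis using le_add_nonneg[OF vo] by simp
qed

lemma part1:
  fixes conv :: "(nat \<Rightarrow> 'y::real_vector) \<Rightarrow> 'y \<Rightarrow> bool"
    and le :: "'y \<Rightarrow> 'y \<Rightarrow> bool"
    and d :: "'x \<Rightarrow> 'x \<Rightarrow> 'y"
  assumes sv: "solid_vector_space conv le"
    and cmet: "cone_metric le d"
  assumes h: "cm_conv conv le d xs a \<and> cm_conv conv le d xs b"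
  shows "a = b"
proof -
  have vc: "vs_conv conv" and vo: "vector_ordering conv le" and sc: "solid_cone conv {x. le 0 x}"
    by (rule sv_facts[OF sv])+
  have cm: "\<And>x y. le 0 (d x y)" "\<And>x y. d x y = 0 \<longleftrightarrow> x = y" "\<And>x y. d x y = d y x"
    "\<And>x y z. le (d x y) (d x z + d z y)"
    using cm_nn[OF cmet] cm_zero[OF cmet] cm_sym[OF cmet] cm_tri[OF cmet] by this+
  have "d a b = 0"
  proof (rule zero_lemma[OF sv cm(1)])
    fix c assume c: "slt conv le 0 c"
    have c2: "slt conv le 0 ((1/2) *\<^sub>R c)"
      using interior_scale[OF sv, of c "1/2"] c unfolding slt_def by simp
    have "\<forall>\<^sub>F n in sequentially. slt conv le (d (xs n) a) ((1/2) *\<^sub>R c) \<and>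
                                 slt conv le (d (xs n) b) ((1/2) *\<^sub>R c)"
      using h c2 unfolding cm_conv_def by (simp add: eventually_conj)
    then obtain n where n: "slt conv le (d (xs n) a) ((1/2) *\<^sub>R c)"
        "slt conv le (d (xs n) b) ((1/2) *\<^sub>R c)"
      unfolding eventually_sequentially by blast
    have "(1/2) *\<^sub>R c - d (xs n) a + ((1/2) *\<^sub>R c - d (xs n) b) \<in> conv_interior conv {x. le 0 x}"
      using slt_add[OF sv, of "(1/2) *\<^sub>R c - d (xs n) a" "(1/2) *\<^sub>R c - d (xs n) b"] n
      unfolding slt_def by simp
    then have "slt conv le (d a (xs n) + d (xs n) b) c"
    proof -
      have hc: "(1/2::real) *\<^sub>R c + (1/2) *\<^sub>R c = c" by (simp flip: scaleR_add_left)
      have "(1/2) *\<^sub>R c - d (xs n) a + ((1/2) *\<^sub>R c - d (xs n) b) = c - (d a (xs n) + d (xs n) b)"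
        using cm(3)[of a "xs n"] hc by (simp add: algebra_simps)
      with \<open>_ \<in> conv_interior conv _\<close> show ?thesis unfolding slt_def by simp
    qed
    then show "slt conv le (d a b) c" using le_slt_trans[OF sv cm(4)] by blast
  qed
  then show "a = b" using cm(2) by blast
qed

lemma part2:
  fixes conv :: "(nat \<Rightarrow> 'y::real_vector) \<Rightarrow> 'y \<Rightarrow> bool"
    and le :: "'y \<Rightarrow> 'y \<Rightarrow> bool"
    and d :: "'x \<Rightarrow> 'x \<Rightarrow> 'y"
  assumes sv: "solid_vector_space conv le"
    and cmet: "cone_metric le d"
  assumes h: "cm_conv conv le d xs a \<and> strict_mono (g::nat\<Rightarrow>nat)"
  shows "cm_conv conv le d (xs \<circ> g) a"
proof -
  have vc: "vs_conv conv" and vo: "vector_ordering conv le" and sc: "solid_cone conv {x. le 0 x}"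
    by (rule sv_facts[OF sv])+
  have cm: "\<And>x y. le 0 (d x y)" "\<And>x y. d x y = 0 \<longleftrightarrow> x = y" "\<And>x y. d x y = d y x"
    "\<And>x y z. le (d x y) (d x z + d z y)"
    using cm_nn[OF cmet] cm_zero[OF cmet] cm_sym[OF cmet] cm_tri[OF cmet] by this+
  have fl: "filterlim g sequentially sequentially" using h filterlim_subseq by blast
  show "cm_conv conv le d (xs \<circ> g) a" unfolding cm_conv_def
  proof (intro allI impI)
    fix c assume "slt conv le 0 c"
    then have "\<forall>\<^sub>F n in sequentially. slt conv le (d (xs n) a) c" using h unfolding cm_conv_def by blast
    from eventually_compose_filterlim[OF this fl]
    show "\<forall>\<^sub>F n in sequentially. slt conv le (d ((xs \<circ> g) n) a) c" by simp
  qed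
qed

lemma part3:
  fixes conv :: "(nat \<Rightarrow> 'y::real_vector) \<Rightarrow> 'y \<Rightarrow> bool"
    and le :: "'y \<Rightarrow> 'y \<Rightarrow> bool"
    and d :: "'x \<Rightarrow> 'x \<Rightarrow> 'y"
  assumes sv: "solid_vector_space conv le"
    and cmet: "cone_metric le d"
  assumes h: "cm_conv conv le d xs a"
  shows "\<exists>c r. le 0 r \<and> range xs \<subseteq> cm_cball le d c r"
proof -
  have vc: "vs_conv conv" and vo: "vector_ordering conv le" and sc: "solid_cone conv {x. le 0 x}"
    by (rule sv_facts[OF sv])+
  have cm: "\<And>x y. le 0 (d x y)" "\<And>x y. d x y = 0 \<longleftrightarrow> x = y" "\<And>x y. d x y = d y x"
    "\<And>x y z. le (d x y) (d x z + d z y)"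
    using cm_nn[OF cmet] cm_zero[OF cmet] cm_sym[OF cmet] cm_tri[OF cmet] by this+
  obtain c0 where c0: "c0 \<in> conv_interior conv {x. le 0 x}" using sc_int[OF sc] by blast
  then have "slt conv le 0 c0" unfolding slt_def by simp
  then have "\<forall>\<^sub>F n in sequentially. slt conv le (d (xs n) a) c0" using h unfolding cm_conv_def by blast
  then obtain N where N: "\<And>n. n \<ge> N \<Longrightarrow> slt conv le (d (xs n) a) c0"
    unfolding eventually_sequentially by blast
  have c0nn: "le 0 c0" using c0 by (rule interior_pos)
  define r where "r = c0 + (\<Sum>n<N. d (xs n) a)"
  have snn: "le 0 (\<Sum>n<N. d (xs n) a)" by (rule sum_nonneg_le[OF vo]) (simp_all add: cm(1))
  have "le 0 r" unfolding r_def using le_add_nonneg[OF vo c0nn snn] .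
  moreover have "range xs \<subseteq> cm_cball le d a r"
  proof
    fix y assume "y \<in> range xs"
    then obtain n where y: "y = xs n" by (rule rangeE)
    show "y \<in> cm_cball le d a r"
    proof (cases "n \<ge> N")
      case True
      have "le (d (xs n) a) c0" by (rule slt_le[OF sv N[OF True]])
      then have "le (d (xs n) a) (c0 + (\<Sum>n<N. d (xs n) a))" by (rule le_add_nonneg[OF vo _ snn])
      then show ?thesis unfolding cm_cball_def r_def y by simp
    next
      case False
      have "le (d (xs n) a) (\<Sum>n<N. d (xs n) a)"
        by (rule term_le_sum[OF vo, of "{..<N}" n "\<lambda>n. d (xs n) a"]) (use False in \<open>simp_all add: cm(1)\<close>)
      then have "le (d (xs n) a) ((\<Sum>n<N. d (xs n) a) + c0)" by (rule le_add_nonneg[OF vo _ c0nn])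
      then show ?thesis unfolding cm_cball_def r_def y by (simp add: add.commute)
    qed
  qed
  ultimately show "\<exists>c r. le 0 r \<and> range xs \<subseteq> cm_cball le d c r" by (intro exI conjI)
qed

lemma part4:
  fixes conv :: "(nat \<Rightarrow> 'y::real_vector) \<Rightarrow> 'y \<Rightarrow> bool"
    and le :: "'y \<Rightarrow> 'y \<Rightarrow> bool"
    and d :: "'x \<Rightarrow> 'x \<Rightarrow> 'y"
  assumes sv: "solid_vector_space conv le"
    and cmet: "cone_metric le d"
  assumes fin: "finite {n. xs n \<noteq> ys n}"
  shows "cm_conv conv le d xs a \<longleftrightarrow> cm_conv conv le d ys a"
proof -
  have vc: "vs_conv conv" and vo: "vector_ordering conv le" and sc: "solid_cone conv {x. le 0 x}"
    by (rule sv_facts[OF sv])+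
  have cm: "\<And>x y. le 0 (d x y)" "\<And>x y. d x y = 0 \<longleftrightarrow> x = y" "\<And>x y. d x y = d y x"
    "\<And>x y z. le (d x y) (d x z + d z y)"
    using cm_nn[OF cmet] cm_zero[OF cmet] cm_sym[OF cmet] cm_tri[OF cmet] by this+
  from fin obtain N where N: "\<forall>n\<in>{n. xs n \<noteq> ys n}. n < N"
    unfolding finite_nat_set_iff_bounded ..
  have ev: "\<forall>\<^sub>F n in sequentially. xs n = ys n"
    unfolding eventually_sequentially
  proof (rule exI[of _ N], intro allI impI)
    fix n assume nN: "N \<le> n"
    show "xs n = ys n"
    proof (rule ccontr)
      assume "xs n \<noteq> ys n"
      then have "n < N" using N by simp
      with nN show False by simp
    qed
  qed
  show "cm_conv conv le d xs a \<longleftrightarrow> cm_conv conv le d ys a"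
    unfolding cm_conv_def
  proof (intro iffI allI impI)
    fix c assume "\<forall>c. slt conv le 0 c \<longrightarrow> (\<forall>\<^sub>F n in sequentially. slt conv le (d (xs n) a) c)"
      "slt conv le 0 c"
    then have "\<forall>\<^sub>F n in sequentially. slt conv le (d (xs n) a) c" by blast
    then show "\<forall>\<^sub>F n in sequentially. slt conv le (d (ys n) a) c"
      using ev by eventually_elim simp
  next
    fix c assume "\<forall>c. slt conv le 0 c \<longrightarrow> (\<forall>\<^sub>F n in sequentially. slt conv le (d (ys n) a) c)"
      "slt conv le 0 c"
    then have "\<forall>\<^sub>F n in sequentially. slt conv le (d (ys n) a) c" by blast
    then show "\<forall>\<^sub>F n in sequentially. slt conv le (d (xs n) a) c"
      using ev by eventually_elim simp
  qed
qed

theorem theorem9p15: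
  fixes conv :: "(nat \<Rightarrow> 'y::real_vector) \<Rightarrow> 'y \<Rightarrow> bool"
    and le :: "'y \<Rightarrow> 'y \<Rightarrow> bool"
    and d :: "'x \<Rightarrow> 'x \<Rightarrow> 'y"
  assumes "solid_vector_space conv le"
    and "cone_metric le d"
  shows "(\<forall>xs a b. cm_conv conv le d xs a \<and> cm_conv conv le d xs b \<longrightarrow> a = b)
    \<and> (\<forall>xs a g. cm_conv conv le d xs a \<and> strict_mono g \<longrightarrow> cm_conv conv le d (xs \<circ> g) a)
    \<and> (\<forall>xs a. cm_conv conv le d xs a \<longrightarrow>
          (\<exists>c r. le 0 r \<and> range xs \<subseteq> cm_cball le d c r))
    \<and> (\<forall>xs ys. finite {n. xs n \<noteq> ys n} \<longrightarrow>
          (\<forall>a. cm_conv conv le d xs a \<longleftrightarrow> cm_conv conv le d ys a))"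
proof (intro conjI allI impI)
  show "\<And>xs a b. cm_conv conv le d xs a \<and> cm_conv conv le d xs b \<Longrightarrow> a = b"
    by (rule part1[OF assms])
  show "\<And>xs a g. cm_conv conv le d xs a \<and> strict_mono g \<Longrightarrow> cm_conv conv le d (xs \<circ> g) a"
    by (rule part2[OF assms])
  show "\<And>xs a. cm_conv conv le d xs a \<Longrightarrow> \<exists>c r. le 0 r \<and> range xs \<subseteq> cm_cball le d c r"
    by (rule part3[OF assms])
  show "\<And>xs ys a. finite {n. xs n \<noteq> ys n} \<Longrightarrow> cm_conv conv le d xs a = cm_conv conv le d ys a"
    by (rule part4[OF assms])
qed

end
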